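(* Let $m\ge1$ and let $\Omega\subset\mathbb{R}^{2m}$ be a bounded domain with coordinates $(x_1,\dots,x_{2m})$. Let $\vec F=(f_1,f_2,\dots,f_{2m})$ be a $C^1$ vector field on $\Omega$ and define $\vec F^{*}=(f_2,-f_1,f_4,-f_3,\dots,f_{2m},-f_{2m-1})$. For $w\in C^1(\Omega)$ let $S_{\vec F}(w)=\{p\in\Omega:(\nabla w+\vec F)(p)=0\}$ and $N_{\vec F}(w)=(\nabla w+\vec F)/|\nabla w+\vec F|$ on $\Omega\setminus S_{\vec F}(w)$. Let $u,v\in C^2(\Omega)\cap C^0(\bar\Omega)$ satisfy $N_{\vec F}(u)=N_{\vec F}(v)$ in $\Omega\setminus(S_{\vec F}(u)\cup S_{\vec F}(v))$ and $u=v$ on $\partial\Omega$, and suppose $\operatorname{div}\vec F^*>0$ almost everywhere in $\Omega$. Then $u=v$ on $\bar\Omega$. *)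

theory Defs
  imports "HOL-Analysis.Analysis"
begin

text \<open>Points of R^(2m) are vectors indexed by 'm \<times> bool; the coordinate
  (i, False) plays the role of x_(2i-1) and (i, True) that of x_(2i).\<close>

definition grad :: "(real ^ 'n \<Rightarrow> real) \<Rightarrow> real ^ 'n \<Rightarrow> real ^ 'n" where
  "grad w p = (\<chi> i. frechet_derivative w (at p) (axis i 1))"

definition C1_fun :: "(real ^ 'n) set \<Rightarrow> (real ^ 'n \<Rightarrow> real) \<Rightarrow> bool" where
  "C1_fun S w \<longleftrightarrow> (\<forall>x\<in>S. w differentiable (at x)) \<and> continuous_on S (grad w)"

definition C1_field :: "(real ^ 'n) set \<Rightarrow> (real ^ 'n \<Rightarrow> real ^ 'n) \<Rightarrow> bool" where
  "C1_field S F \<longleftrightarrow> (\<forall>x\<in>S. F differentiable (at x)) \<and>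
     (\<forall>i j. continuous_on S (\<lambda>x. frechet_derivative F (at x) (axis j 1) $ i))"

definition C2_fun :: "(real ^ 'n) set \<Rightarrow> (real ^ 'n \<Rightarrow> real) \<Rightarrow> bool" where
  "C2_fun S w \<longleftrightarrow> C1_fun S w \<and> C1_field S (grad w)"

definition divg :: "(real ^ 'n \<Rightarrow> real ^ 'n) \<Rightarrow> real ^ 'n \<Rightarrow> real" where
  "divg F p = (\<Sum>i\<in>UNIV. frechet_derivative F (at p) (axis i 1) $ i)"

definition Fstar :: "(real ^ ('m::finite \<times> bool) \<Rightarrow> real ^ ('m \<times> bool)) \<Rightarrow> real ^ ('m \<times> bool) \<Rightarrow> real ^ ('m \<times> bool)" where
  "Fstar F x = (\<chi> k. if snd k then - (F x $ (fst k, False)) else F x $ (fst k, True))"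

definition singset :: "(real ^ 'n) set \<Rightarrow> (real ^ 'n \<Rightarrow> real ^ 'n) \<Rightarrow> (real ^ 'n \<Rightarrow> real) \<Rightarrow> (real ^ 'n) set" where
  "singset \<Omega> F w = {p \<in> \<Omega>. grad w p + F p = 0}"

definition Nfield :: "(real ^ 'n \<Rightarrow> real ^ 'n) \<Rightarrow> (real ^ 'n \<Rightarrow> real) \<Rightarrow> real ^ 'n \<Rightarrow> real ^ 'n" where
  "Nfield F w p = inverse (norm (grad w p + F p)) *\<^sub>R (grad w p + F p)"

end

theory Submission
  imports Defs "HOL-Analysis.Analysis"
begin


lemma line_deriv:
  fixes g :: "'a::real_normed_vector \<Rightarrow> real"
  assumes "(g has_derivative g') (at (x + t *\<^sub>R e))"
  shows "((\<lambda>s. g (x + s *\<^sub>R e)) has_real_derivative g' e) (at t)"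
proof -
  have l: "((\<lambda>s. x + s *\<^sub>R e) has_derivative (\<lambda>s. s *\<^sub>R e)) (at t)"
    by (auto intro!: derivative_eq_intros)
  have "((\<lambda>s. g (x + s *\<^sub>R e)) has_derivative (\<lambda>s. g' (s *\<^sub>R e))) (at t)"
    using has_derivative_compose[OF l assms] by (simp add: o_def)
  moreover have "g' (s *\<^sub>R e) = g' e * s" for s
    using has_derivative_bounded_linear[OF assms] linear_scale[of g'] 
    by (simp add: bounded_linear.linear linear_scale)
  ultimately show ?thesis unfolding has_field_derivative_def by (simp add: mult.commute[of _ "g' e"])
qed

lemma line_mvt:
  fixes g :: "'a::real_normed_vector \<Rightarrow> real"
  assumes "0 < h" "\<And>t. 0 \<le> t \<Longrightarrow> t \<le> h \<Longrightarrow> (g has_derivative g' t) (at (x + t *\<^sub>R e))"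
  shows "\<exists>t. 0 < t \<and> t < h \<and> g (x + h *\<^sub>R e) - g x = h * g' t e"
proof -
  have "\<And>t. 0 \<le> t \<Longrightarrow> t \<le> h \<Longrightarrow> ((\<lambda>s. g (x + s *\<^sub>R e)) has_real_derivative g' t e) (at t)"
    using assms line_deriv by blast
  from MVT2[OF assms(1) this] show ?thesis by auto
qed

lemma integral_partial_zero:
  fixes g :: "'a::euclidean_space \<Rightarrow> real"
  assumes K: "compact K" and z: "\<And>x. x \<notin> K \<Longrightarrow> g x = 0"
    and d: "\<And>x. (g has_derivative g' x) (at x)"
    and c: "continuous_on K (\<lambda>x. g' x e)"
  shows "((\<lambda>x. g' x e) has_integral 0) UNIV"
proof -
  have z': "g' x e = 0" if "x \<notin> K" for x
  proof -
    have "(g has_derivative (\<lambda>_. 0)) (at x)"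
      by (rule has_derivative_transform_within_open[of "\<lambda>_. 0" _ _ UNIV "- K"])
         (use that K z in \<open>auto simp: compact_imp_closed open_Compl\<close>)
    with d[of x] have "g' x = (\<lambda>_. 0)" using has_derivative_unique by blast
    then show ?thesis by simp
  qed
  have "compact ((\<lambda>x. g' x e) ` K)" using compact_continuous_image[OF c K] .
  then obtain M0 where M0: "\<And>x. x \<in> K \<Longrightarrow> norm (g' x e) \<le> M0"
    using compact_imp_bounded bounded_iff by (metis image_eqI)
  define M where "M = max M0 0"
  have M: "\<bar>g' x e\<bar> \<le> M" for x
    using M0[of x] z'[of x] by (cases "x \<in> K") (auto simp: M_def)
  have contg: "continuous_on UNIV g"
    using d has_derivative_continuous continuous_at_imp_continuous_on by blast
  obtain a where a: "K \<subseteq> cbox (-a) a" using bounded_subset_cbox_symmetric compact_imp_bounded K by blast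
  obtain I where I: "(g has_integral I) (cbox (-a) a)"
    using integrable_continuous[OF continuous_on_subset[OF contg]] by blast
  have IU: "(g has_integral I) UNIV"
    by (rule has_integral_on_superset[OF I]) (use a z in auto)
  have shiftU: "((\<lambda>x. g (x + c)) has_integral I) UNIV" for c
  proof -
    have "((\<lambda>x. g (x + c)) has_integral I) (cbox (-a - c) (a - c))"
      using has_integral_shift_cbox[OF I, of c] by simp
    then show ?thesis
    proof (rule has_integral_on_superset)
      fix x assume "x \<notin> cbox (- a - c) (a - c)"
      then have "x + c \<notin> cbox (-a) a"
        by (auto simp: mem_box algebra_simps inner_diff_left inner_add_left)
      then show "g (x + c) = 0" using a z by auto
    qed auto
  qed
  define hk where "hk k = 1 / real (Suc k)" for k
  have hk: "0 < hk k" "hk k \<le> 1" for k by (auto simp: hk_def field_simps)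
  define q where "q k x = (g (x + hk k *\<^sub>R e) - g x) / hk k" for k x
  have qi: "(q k has_integral 0) UNIV" for k
  proof -
    have "((\<lambda>x. g (x + hk k *\<^sub>R e) - g x) has_integral I - I) UNIV"
      using has_integral_diff[OF shiftU IU] .
    from has_integral_cmul[OF this, of "1 / hk k"] show ?thesis
      by (simp add: q_def[abs_def] divide_inverse mult.commute)
  qed
  obtain R where R: "K \<subseteq> cball 0 R" using compact_imp_bounded[OF K] bounded_subset_ballD[of K 0] ball_subset_cball by blast
  obtain b where b: "cball (0::'a) (R + norm e) \<subseteq> cbox (-b) b"
    using bounded_subset_cbox_symmetric[of "cball 0 (R + norm e)"] by auto
  define H where "H (x::'a) = (if x \<in> cbox (-b) b then M else 0)" for x
  have Hi: "H integrable_on UNIV"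
    unfolding H_def using has_integral_restrict_UNIV[of "cbox (-b) b" "\<lambda>_. M"]
      integrable_const[of M "-b" b] unfolding integrable_on_def by blast
  have qle: "norm (q k x) \<le> H x" for k x
  proof -
    obtain t where t: "0 < t" "t < hk k" "g (x + hk k *\<^sub>R e) - g x = hk k * g' (x + t *\<^sub>R e) e"
      using line_mvt[of "hk k" g "\<lambda>t. g' (x + t *\<^sub>R e)" x e] hk d by blast
    have "\<bar>q k x\<bar> \<le> M" using t M[of "x + t *\<^sub>R e"] hk[of k] by (simp add: q_def)
    moreover have "q k x = 0" if "x \<notin> cbox (-b) b"
    proof -
      have "x \<notin> K"
      proof
        assume "x \<in> K"
        then have "norm x \<le> R" using R by auto
        then have "norm x \<le> R + norm e" using norm_ge_zero[of e] by linarith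
        then have "x \<in> cball 0 (R + norm e)" by simp
        then show False using that b by auto
      qed
      moreover have "x + hk k *\<^sub>R e \<notin> K"
      proof
        assume "x + hk k *\<^sub>R e \<in> K"
        then have "norm (x + hk k *\<^sub>R e) \<le> R" using R by auto
        moreover have "norm (hk k *\<^sub>R e) \<le> norm e" using hk[of k] by (simp add: mult_left_le_one_le)
        moreover have "norm x \<le> norm (x + hk k *\<^sub>R e) + norm (hk k *\<^sub>R e)"
          using norm_triangle_ineq4[of "x + hk k *\<^sub>R e" "hk k *\<^sub>R e"] by simp
        ultimately have "norm x \<le> R + norm e" by linarith
        then show False using that b by auto
      qed
      ultimately show ?thesis using z by (simp add: q_def)
    qed
    ultimately show ?thesis by (auto simp: H_def)
  qed
  have qconv: "(\<lambda>k. q k x) \<longlonglongrightarrow> g' x e" for x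
  proof -
    have D: "((\<lambda>s. g (x + s *\<^sub>R e)) has_real_derivative g' x e) (at 0)"
      using line_deriv[of g "g' x" x 0 e] d[of x] by simp
    then have L: "((\<lambda>s. (g (x + s *\<^sub>R e) - g x) / s) \<longlongrightarrow> g' x e) (at 0)"
      using DERIV_def[THEN iffD1, OF D] by simp
    have "filterlim hk (at 0) sequentially"
    proof (rule filterlim_atI)
      show "hk \<longlonglongrightarrow> 0" unfolding hk_def using LIMSEQ_inverse_real_of_nat
        by (simp add: inverse_eq_divide)
      show "\<forall>\<^sub>F k in sequentially. hk k \<noteq> 0" using hk by (simp add: less_imp_neq[symmetric])
    qed
    from filterlim_compose[OF L this] show ?thesis by (simp add: q_def o_def)
  qed
  have "(\<lambda>k. integral UNIV (q k)) \<longlonglongrightarrow> integral UNIV (\<lambda>x. g' x e)"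
   and gi: "(\<lambda>x. g' x e) integrable_on UNIV"
    using dominated_convergence[of q UNIV H "\<lambda>x. g' x e"] qi Hi qle qconv
    by (auto simp: integrable_on_def)
  moreover have "integral UNIV (q k) = 0" for k using qi by (simp add: integral_unique)
  ultimately have "(\<lambda>k. 0) \<longlonglongrightarrow> integral UNIV (\<lambda>x. g' x e)" by simp
  then have "integral UNIV (\<lambda>x. g' x e) = 0"
    using LIMSEQ_const_iff by metis
  with gi show ?thesis using integrable_integral by fastforce
qed



lemma has_derivative_shift:
  assumes "(f has_derivative D) (at (y + c))"
  shows "((\<lambda>y. f (y + c)) has_derivative D) (at y)"
proof -
  have "((\<lambda>y. y + c) has_derivative (\<lambda>d. d)) (at y)" by (auto intro!: derivative_eq_intros)
  from has_derivative_compose[OF this assms] show ?thesis by (simp add: o_def)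
qed

lemma pt_close:
  fixes a b :: "'a::real_normed_vector"
  assumes "0 \<le> s" "s \<le> h" "0 \<le> t" "t \<le> h"
  shows "dist (x + s *\<^sub>R a + t *\<^sub>R b) x \<le> h * (norm a + norm b)"
proof -
  have "dist (x + s *\<^sub>R a + t *\<^sub>R b) x = norm (s *\<^sub>R a + t *\<^sub>R b)" by (simp add: dist_norm)
  also have "\<dots> \<le> norm (s *\<^sub>R a) + norm (t *\<^sub>R b)" by (rule norm_triangle_ineq)
  also have "\<dots> = s * norm a + t * norm b" using assms by simp
  also have "\<dots> \<le> h * norm a + h * norm b" using assms
    by (intro add_mono mult_right_mono) auto
  finally show ?thesis by (simp add: algebra_simps)
qed

lemma schwarz_aux:
  fixes f :: "'a::real_normed_vector \<Rightarrow> real"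
  assumes h: "0 < h" and inS: "\<And>s t. 0 \<le> s \<Longrightarrow> s \<le> h \<Longrightarrow> 0 \<le> t \<Longrightarrow> t \<le> h \<Longrightarrow> x + s *\<^sub>R a + t *\<^sub>R b \<in> S"
    and fa: "\<And>y. y \<in> S \<Longrightarrow> (f has_derivative f' y) (at y)"
    and pa: "\<And>y. y \<in> S \<Longrightarrow> ((\<lambda>y. f' y a) has_derivative Da y) (at y)"
  shows "\<exists>s t. 0 < s \<and> s < h \<and> 0 < t \<and> t < h \<and>
     f (x + h *\<^sub>R a + h *\<^sub>R b) - f (x + h *\<^sub>R a) - f (x + h *\<^sub>R b) + f x = h * h * Da (x + s *\<^sub>R a + t *\<^sub>R b) b"
proof -
  define g1 where "g1 y = f (y + h *\<^sub>R b) - f y" for y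
  have "\<exists>s. 0 < s \<and> s < h \<and> g1 (x + h *\<^sub>R a) - g1 x = h * (f' (x + s *\<^sub>R a + h *\<^sub>R b) a - f' (x + s *\<^sub>R a) a)"
  proof (rule line_mvt[OF h, of g1 "\<lambda>s d. f' (x + s *\<^sub>R a + h *\<^sub>R b) d - f' (x + s *\<^sub>R a) d", simplified])
    fix s assume s: "0 \<le> s" "s \<le> h"
    have 1: "x + s *\<^sub>R a + h *\<^sub>R b \<in> S" using inS[of s h] s h by auto
    have 2: "x + s *\<^sub>R a \<in> S" using inS[of s 0] s h by auto
    show "(g1 has_derivative (\<lambda>d. f' (x + s *\<^sub>R a + h *\<^sub>R b) d - f' (x + s *\<^sub>R a) d)) (at (x + s *\<^sub>R a))"
      unfolding g1_def
      by (intro has_derivative_diff has_derivative_shift fa 1 2)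
  qed
  then obtain s where s: "0 < s" "s < h"
    and e1: "g1 (x + h *\<^sub>R a) - g1 x = h * (f' (x + s *\<^sub>R a + h *\<^sub>R b) a - f' (x + s *\<^sub>R a) a)" by blast
  have "\<And>t. 0 \<le> t \<Longrightarrow> t \<le> h \<Longrightarrow> ((\<lambda>y. f' y a) has_derivative Da (x + s *\<^sub>R a + t *\<^sub>R b)) (at (x + s *\<^sub>R a + t *\<^sub>R b))"
    using pa inS s by simp
  from line_mvt[OF h this]
  have "\<exists>t. 0 < t \<and> t < h \<and> f' (x + s *\<^sub>R a + h *\<^sub>R b) a - f' (x + s *\<^sub>R a) a = h * Da (x + s *\<^sub>R a + t *\<^sub>R b) b"
    by simp
  then obtain t where t: "0 < t" "t < h" and e2: "f' (x + s *\<^sub>R a + h *\<^sub>R b) a - f' (x + s *\<^sub>R a) a = h * Da (x + s *\<^sub>R a + t *\<^sub>R b) b"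
    by blast
  have "f (x + h *\<^sub>R a + h *\<^sub>R b) - f (x + h *\<^sub>R a) - f (x + h *\<^sub>R b) + f x = g1 (x + h *\<^sub>R a) - g1 x"
    by (simp add: g1_def)
  then show ?thesis using e1 e2 s t by (intro exI[of _ s] exI[of _ t]) simp
qed

lemma schwarz:
  fixes f :: "'a::real_normed_vector \<Rightarrow> real"
  assumes S: "open S" "x \<in> S"
    and fa: "\<And>y. y \<in> S \<Longrightarrow> (f has_derivative f' y) (at y)"
    and pa: "\<And>y. y \<in> S \<Longrightarrow> ((\<lambda>y. f' y a) has_derivative Da y) (at y)"
    and pb: "\<And>y. y \<in> S \<Longrightarrow> ((\<lambda>y. f' y b) has_derivative Db y) (at y)"
    and ca: "continuous_on S (\<lambda>y. Da y b)" and cb: "continuous_on S (\<lambda>y. Db y a)"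
  shows "Da x b = Db x a"
proof (rule ccontr)
  assume ne: "Da x b \<noteq> Db x a"
  define \<epsilon> where "\<epsilon> = \<bar>Da x b - Db x a\<bar> / 2"
  have \<epsilon>: "\<epsilon> > 0" using ne by (simp add: \<epsilon>_def)
  obtain r where r: "r > 0" "ball x r \<subseteq> S" using S open_contains_ball by blast
  have "isCont (\<lambda>y. Da y b) x" using ca S continuous_on_eq_continuous_at by blast
  from this[unfolded continuous_at_eps_delta, rule_format, OF \<epsilon>]
  obtain d1 where d1: "d1 > 0" "\<And>y. dist y x < d1 \<Longrightarrow> dist (Da y b) (Da x b) < \<epsilon>"
    by blast
  have "isCont (\<lambda>y. Db y a) x" using cb S continuous_on_eq_continuous_at by blast
  from this[unfolded continuous_at_eps_delta, rule_format, OF \<epsilon>]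
  obtain d2 where d2: "d2 > 0" "\<And>y. dist y x < d2 \<Longrightarrow> dist (Db y a) (Db x a) < \<epsilon>"
    by blast
  define \<rho> where "\<rho> = min r (min d1 d2)"
  have \<rho>: "\<rho> > 0" "\<rho> \<le> r" "\<rho> \<le> d1" "\<rho> \<le> d2" using r d1 d2 by (auto simp: \<rho>_def)
  define h where "h = \<rho> / (2 * (norm a + norm b + 1))"
  have npos: "norm a + norm b + 1 > 0" using norm_ge_zero[of a] norm_ge_zero[of b] by linarith
  have hpos: "h > 0" using \<rho> npos unfolding h_def by simp
  have hsmall: "h * (norm a + norm b) < \<rho>"
  proof -
    have "h * (norm a + norm b) \<le> h * (norm a + norm b + 1)" using hpos by simp
    also have "\<dots> = \<rho> / 2" unfolding h_def using npos by (simp add: field_simps)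
    finally show ?thesis using \<rho> by simp
  qed
  have close: "dist (x + s *\<^sub>R a + t *\<^sub>R b) x < \<rho>" if "0 \<le> s" "s \<le> h" "0 \<le> t" "t \<le> h" for s t
    using pt_close[OF that, of x a b] hsmall by simp
  have close': "dist (x + s *\<^sub>R b + t *\<^sub>R a) x < \<rho>" if "0 \<le> s" "s \<le> h" "0 \<le> t" "t \<le> h" for s t
    using pt_close[OF that, of x b a] hsmall by (simp add: add.commute)
  have inS1: "x + s *\<^sub>R a + t *\<^sub>R b \<in> S" if "0 \<le> s" "s \<le> h" "0 \<le> t" "t \<le> h" for s t
    using close[OF that] \<rho> r by (auto simp: dist_commute subset_iff)
  have inS2: "x + s *\<^sub>R b + t *\<^sub>R a \<in> S" if "0 \<le> s" "s \<le> h" "0 \<le> t" "t \<le> h" for s t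
    using close'[OF that] \<rho> r by (auto simp: dist_commute subset_iff)
  obtain s1 t1 where st1: "0 < s1" "s1 < h" "0 < t1" "t1 < h"
    and E1: "f (x + h *\<^sub>R a + h *\<^sub>R b) - f (x + h *\<^sub>R a) - f (x + h *\<^sub>R b) + f x = h * h * Da (x + s1 *\<^sub>R a + t1 *\<^sub>R b) b"
    using schwarz_aux[OF hpos inS1 fa pa] by blast
  obtain s2 t2 where st2: "0 < s2" "s2 < h" "0 < t2" "t2 < h"
    and E2: "f (x + h *\<^sub>R b + h *\<^sub>R a) - f (x + h *\<^sub>R b) - f (x + h *\<^sub>R a) + f x = h * h * Db (x + s2 *\<^sub>R b + t2 *\<^sub>R a) a"
    using schwarz_aux[OF hpos inS2 fa pb] by blast
  have pe: "x + h *\<^sub>R b + h *\<^sub>R a = x + h *\<^sub>R a + h *\<^sub>R b" by (simp add: algebra_simps)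
  have "f (x + h *\<^sub>R b + h *\<^sub>R a) = f (x + h *\<^sub>R a + h *\<^sub>R b)" by (simp only: pe)
  with E1 E2 have "h * h * Da (x + s1 *\<^sub>R a + t1 *\<^sub>R b) b = h * h * Db (x + s2 *\<^sub>R b + t2 *\<^sub>R a) a"
    by linarith
  then have eq: "Da (x + s1 *\<^sub>R a + t1 *\<^sub>R b) b = Db (x + s2 *\<^sub>R b + t2 *\<^sub>R a) a" using hpos by simp
  have "dist (Da (x + s1 *\<^sub>R a + t1 *\<^sub>R b) b) (Da x b) < \<epsilon>"
  proof -
    have "dist (x + s1 *\<^sub>R a + t1 *\<^sub>R b) x < d1" using close[of s1 t1] st1 \<rho> by simp
    then show ?thesis by (rule d1(2))
  qed
  moreover have "dist (Db (x + s2 *\<^sub>R b + t2 *\<^sub>R a) a) (Db x a) < \<epsilon>"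
  proof -
    have "dist (x + s2 *\<^sub>R b + t2 *\<^sub>R a) x < d2" using close'[of s2 t2] st2 \<rho> by simp
    then show ?thesis by (rule d2(2))
  qed
  ultimately show False using eq unfolding \<epsilon>_def dist_real_def by (simp add: abs_if split: if_splits)
qed



lemma psi_deriv:
  fixes e t :: real
  shows "((\<lambda>t. (max 0 (t - e))^2) has_real_derivative 2 * max 0 (t - e)) (at t)"
proof (cases t e rule: linorder_cases)
  case less
  have "((\<lambda>t. 0) has_real_derivative 0) (at t)" by simp
  from has_field_derivative_transform_within_open[OF this, of "{..<e}"] less
  show ?thesis by simp
next
  case greater
  have "((\<lambda>t. (t - e)^2) has_real_derivative 2 * (t - e)) (at t)"
    by (auto intro!: derivative_eq_intros)
  from has_field_derivative_transform_within_open[OF this, of "{e<..}"] greater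
  show ?thesis by simp
next
  case equal
  have "((\<lambda>h. ((max 0 (t + h - e))^2 - (max 0 (t - e))^2) / h) \<longlongrightarrow> 0) (at 0)"
  proof (rule Lim_null_comparison)
    show "\<forall>\<^sub>F h in at 0. norm (((max 0 (t + h - e))^2 - (max 0 (t - e))^2) / h) \<le> \<bar>h\<bar>"
      using equal by (auto simp: power2_eq_square abs_mult max_def divide_le_eq)
    show "((\<lambda>h::real. \<bar>h\<bar>) \<longlongrightarrow> 0) (at 0)"
      using tendsto_rabs[OF tendsto_ident_at[of 0 UNIV]] by simp
  qed
  then show ?thesis using equal by (simp add: DERIV_def)
qed

lemma AE_point:
  fixes U :: "'a::euclidean_space set"
  assumes "open U" "U \<noteq> {}" "AE x in lebesgue. P x"
  shows "\<exists>x\<in>U. P x"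
proof (rule ccontr)
  assume "\<not> ?thesis"
  then have nP: "\<And>x. x \<in> U \<Longrightarrow> \<not> P x" by blast
  obtain x0 where x0: "x0 \<in> U" using assms by blast
  obtain r where r: "r > 0" "ball x0 r \<subseteq> U" using assms(1) x0 open_contains_ball by blast
  obtain N where N: "{x \<in> space lebesgue. \<not> P x} \<subseteq> N" "emeasure lebesgue N = 0" "N \<in> sets lebesgue"
    using AE_E[OF assms(3)] by blast
  have "N \<in> null_sets lebesgue" by (intro null_setsI N(2) N(3))
  moreover have "ball x0 r \<in> sets lebesgue" using lmeasurable_ball fmeasurableD by blast
  moreover have "ball x0 r \<subseteq> N" using N r nP by auto
  ultimately have "ball x0 r \<in> null_sets lebesgue" using null_sets_subset by blast
  then have "negligible (ball x0 r)" using negligible_iff_null_sets by blast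
  moreover have "\<not> negligible (ball x0 r)" using open_not_negligible[of "ball x0 r"] r by simp
  ultimately show False by blast
qed

lemma integral_pos_contra:
  fixes D :: "'a::euclidean_space \<Rightarrow> real"
  assumes "\<And>x. D x \<ge> 0" "(D has_integral 0) UNIV" "open S" "x1 \<in> S" "continuous_on S D" "D x1 > 0"
  shows False
proof -
  have cx: "isCont D x1" using assms(3,4,5) continuous_on_eq_continuous_at by blast
  define c where "c = D x1 / 2"
  have c: "c > 0" using assms(6) by (simp add: c_def)
  from cx[unfolded continuous_at_eps_delta, rule_format, OF c]
  obtain d where d: "d > 0" "\<And>y. dist y x1 < d \<Longrightarrow> dist (D y) (D x1) < c" by blast
  have Dc: "D y > c" if "y \<in> ball x1 d" for y
    using d(2)[of y] that by (auto simp: dist_commute dist_real_def c_def abs_if split: if_splits)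
  define m where "m = measure lebesgue (ball x1 d)"
  have ind: "(indicat_real (ball x1 d) has_integral m) UNIV"
    using lmeasurable_iff_indicator_has_integral m_def lmeasurable_ball by blast
  have "m \<noteq> 0" using negligible_iff_measure0[of "ball x1 d"] open_not_negligible[of "ball x1 d"] d
    by (simp add: m_def)
  moreover have "m \<ge> 0" by (simp add: m_def)
  ultimately have mpos: "m > 0" by simp
  have "((\<lambda>x. c * indicat_real (ball x1 d) x) has_integral c * m) UNIV"
    using has_integral_cmul[OF ind, of c] by simp
  then have "c * m \<le> 0"
  proof (rule has_integral_le[OF _ assms(2)])
    fix x show "c * indicat_real (ball x1 d) x \<le> D x"
      using Dc[of x] assms(1)[of x] c by (cases "x \<in> ball x1 d") auto
  qed
  moreover have "c * m > 0" using c mpos by simp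
  ultimately show False by linarith
qed

definition Jm :: "real^('m::finite \<times> bool) \<Rightarrow> real^('m \<times> bool)" where
  "Jm y = (\<chi> k. if snd k then - (y $ (fst k, False)) else y $ (fst k, True))"

lemma Jm_linear: "bounded_linear Jm"
proof -
  have "linear Jm" by (rule linearI) (auto simp: Jm_def vec_eq_iff)
  then show ?thesis using linear_conv_bounded_linear by blast
qed

lemma Fstar_Jm: "Fstar F x = Jm (F x)"
  by (simp add: Fstar_def Jm_def)

lemma sum_pair: "(\<Sum>k\<in>(UNIV::('m::finite \<times> bool) set). f k) = (\<Sum>j\<in>UNIV. f (j, False) + f (j, True))"
proof -
  have "(\<Sum>k\<in>(UNIV::('m \<times> bool) set). f k) = (\<Sum>j\<in>UNIV. \<Sum>b\<in>UNIV. f (j, b))"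
    by (simp add: sum.cartesian_product)
  also have "\<dots> = (\<Sum>j\<in>UNIV. f (j, False) + f (j, True))" by (simp add: UNIV_bool)
  finally show ?thesis .
qed

lemma Jm_perp: "Y \<bullet> Jm Y = 0"
  unfolding inner_vec_def by (simp add: sum_pair Jm_def)

lemma one_side:
  fixes \<Omega> :: "(real ^ ('m::finite \<times> bool)) set"
    and F :: "real ^ ('m \<times> bool) \<Rightarrow> real ^ ('m \<times> bool)"
    and u v :: "real ^ ('m \<times> bool) \<Rightarrow> real"
  assumes op: "open \<Omega>" and bd: "bounded \<Omega>"
    and C1F: "C1_field \<Omega> F"
    and C2u: "C2_fun \<Omega> u" and cu: "continuous_on (closure \<Omega>) u"
    and C2v: "C2_fun \<Omega> v" and cv: "continuous_on (closure \<Omega>) v"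
    and NN: "\<forall>p \<in> \<Omega> - (singset \<Omega> F u \<union> singset \<Omega> F v). Nfield F u p = Nfield F v p"
    and fr: "\<forall>p \<in> frontier \<Omega>. u p = v p"
    and AE: "AE x in lebesgue. x \<in> \<Omega> \<longrightarrow> divg (Fstar F) x > 0"
  shows "\<forall>p \<in> \<Omega>. u p \<le> v p"
proof (rule ccontr)
  assume "\<not> ?thesis"
  then obtain x0 where x0: "x0 \<in> \<Omega>" "u x0 > v x0" by force
  define \<epsilon> where "\<epsilon> = (u x0 - v x0) / 2"
  have \<epsilon>: "\<epsilon> > 0" using x0 by (simp add: \<epsilon>_def)
  define w where "w x = u x - v x" for x
  define \<psi> where "\<psi> t = (max 0 (t - \<epsilon>))^2" for t
  define \<psi>' where "\<psi>' t = 2 * max 0 (t - \<epsilon>)" for t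
  have dpsi: "(\<psi> has_derivative (*) (\<psi>' t)) (at t)" for t
    using psi_deriv[of \<epsilon> t] unfolding \<psi>_def[abs_def] \<psi>'_def has_field_derivative_def .
  have psi_nn: "\<psi> t \<ge> 0" for t by (simp add: \<psi>_def)
  have cpsi: "continuous_on UNIV \<psi>" unfolding \<psi>_def[abs_def] by (intro continuous_intros)
  have cpsi': "continuous_on UNIV \<psi>'" unfolding \<psi>'_def[abs_def] by (intro continuous_intros)

  from C2u have du: "\<And>x. x \<in> \<Omega> \<Longrightarrow> u differentiable (at x)" and cgu: "continuous_on \<Omega> (grad u)"
    by (auto simp: C2_fun_def C1_fun_def)
  from C2v have dv: "\<And>x. x \<in> \<Omega> \<Longrightarrow> v differentiable (at x)" and cgv: "continuous_on \<Omega> (grad v)"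
    and dgv: "\<And>x. x \<in> \<Omega> \<Longrightarrow> grad v differentiable (at x)"
    and cgv2: "\<And>i j. continuous_on \<Omega> (\<lambda>x. frechet_derivative (grad v) (at x) (axis j 1) $ i)"
    by (auto simp: C2_fun_def C1_fun_def C1_field_def)
  from C1F have dF: "\<And>x. x \<in> \<Omega> \<Longrightarrow> F differentiable (at x)"
    and cF2: "\<And>i j. continuous_on \<Omega> (\<lambda>x. frechet_derivative F (at x) (axis j 1) $ i)"
    by (auto simp: C1_field_def)
  have Du: "(u has_derivative frechet_derivative u (at x)) (at x)" if "x \<in> \<Omega>" for x
    using du[OF that] frechet_derivative_works by blast
  have Dv: "(v has_derivative frechet_derivative v (at x)) (at x)" if "x \<in> \<Omega>" for x
    using dv[OF that] frechet_derivative_works by blast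
  have Dgv: "(grad v has_derivative frechet_derivative (grad v) (at x)) (at x)" if "x \<in> \<Omega>" for x
    using dgv[OF that] frechet_derivative_works by blast
  have DF: "(F has_derivative frechet_derivative F (at x)) (at x)" if "x \<in> \<Omega>" for x
    using dF[OF that] frechet_derivative_works by blast
  have gradc: "grad f x $ i = frechet_derivative f (at x) (axis i 1)" for f :: "real ^ ('m \<times> bool) \<Rightarrow> real" and x i
    by (simp add: grad_def)
  have cF: "continuous_on \<Omega> F"
    using dF differentiable_imp_continuous_on differentiable_at_imp_differentiable_on by blast
  have cw: "continuous_on (closure \<Omega>) w" unfolding w_def[abs_def] using cu cv by (intro continuous_intros)
  have cwO: "continuous_on \<Omega> w" using continuous_on_subset[OF cw closure_subset] .

  define hh where "hh x = Jm (grad v x + F x)" for x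
  define hh' where "hh' x d = Jm (frechet_derivative (grad v) (at x) d + frechet_derivative F (at x) d)" for x d
  have Dhh: "(hh has_derivative hh' x) (at x)" if "x \<in> \<Omega>" for x
    unfolding hh_def[abs_def] hh'_def
    using bounded_linear.has_derivative[OF Jm_linear has_derivative_add[OF Dgv[OF that] DF[OF that]]] .
  have chh: "continuous_on \<Omega> hh"
    unfolding hh_def[abs_def]
    using linear_continuous_on_compose[OF continuous_on_add[OF cgv cF] bounded_linear.linear[OF Jm_linear]] .
  have hh'c: "hh' x (axis i 1) $ i = (if snd i then - (frechet_derivative (grad v) (at x) (axis i 1) $ (fst i, False)
        + frechet_derivative F (at x) (axis i 1) $ (fst i, False))
      else frechet_derivative (grad v) (at x) (axis i 1) $ (fst i, True)
        + frechet_derivative F (at x) (axis i 1) $ (fst i, True))" for x i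
    by (simp add: hh'_def Jm_def)
  have chh': "continuous_on \<Omega> (\<lambda>x. hh' x (axis i 1) $ i)" for i
    unfolding hh'c by (cases "snd i") (auto intro!: continuous_intros cgv2 cF2)

  define K where "K = closure \<Omega> \<inter> w -` {\<epsilon>..}"
  have cK: "compact K"
  proof -
    have "closed K" unfolding K_def by (rule continuous_closed_preimage[OF cw]) auto
    moreover have "bounded K" unfolding K_def using bd bounded_closure bounded_subset by blast
    ultimately show ?thesis using compact_eq_bounded_closed by blast
  qed
  have KO: "K \<subseteq> \<Omega>"
  proof
    fix x assume xK: "x \<in> K"
    show "x \<in> \<Omega>"
    proof (rule ccontr)
      assume "x \<notin> \<Omega>"
      then have "x \<in> frontier \<Omega>" using xK op by (auto simp: K_def frontier_def interior_open)
      then have "w x = 0" using fr by (simp add: w_def)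
      then show False using xK \<epsilon> by (auto simp: K_def)
    qed
  qed
  have psi0: "\<psi> (w x) = 0" if "x \<in> \<Omega>" "x \<notin> K" for x
    using that closure_subset by (auto simp: K_def \<psi>_def)
  have psi0': "\<psi>' (w x) = 0" if "x \<in> \<Omega>" "x \<notin> K" for x
    using that closure_subset by (auto simp: K_def \<psi>'_def)

  define G where "G i x = (if x \<in> \<Omega> then \<psi> (w x) * (hh x $ i) else 0)" for i x
  define G' where "G' i x = (if x \<in> \<Omega> then (\<lambda>d. \<psi>' (w x) * (frechet_derivative u (at x) d - frechet_derivative v (at x) d) * (hh x $ i) + \<psi> (w x) * (hh' x d $ i)) else (\<lambda>d. 0))" for i x
  have Gz: "G i x = 0" if "x \<notin> K" for i x
    using psi0[of x] that by (simp add: G_def)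
  have GD: "(G i has_derivative G' i x) (at x)" for i x
  proof (cases "x \<in> \<Omega>")
    case True
    have Dw: "(w has_derivative (\<lambda>d. frechet_derivative u (at x) d - frechet_derivative v (at x) d)) (at x)"
      unfolding w_def[abs_def] using has_derivative_diff[OF Du[OF True] Dv[OF True]] .
    have Dpw: "((\<lambda>y. \<psi> (w y)) has_derivative (\<lambda>d. \<psi>' (w x) * (frechet_derivative u (at x) d - frechet_derivative v (at x) d))) (at x)"
      using has_derivative_compose[OF Dw dpsi] by (simp add: o_def)
    have Dhi: "((\<lambda>y. hh y $ i) has_derivative (\<lambda>d. hh' x d $ i)) (at x)"
      using bounded_linear.has_derivative[OF bounded_linear_vec_nth Dhh[OF True]] .
    have "((\<lambda>y. \<psi> (w y) * (hh y $ i)) has_derivative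
       (\<lambda>d. \<psi> (w x) * (hh' x d $ i) + \<psi>' (w x) * (frechet_derivative u (at x) d - frechet_derivative v (at x) d) * (hh x $ i))) (at x)"
      using has_derivative_mult[OF Dpw Dhi] .
    from has_derivative_transform_within_open[OF this op True, of "G i"]
    have "(G i has_derivative
       (\<lambda>d. \<psi> (w x) * (hh' x d $ i) + \<psi>' (w x) * (frechet_derivative u (at x) d - frechet_derivative v (at x) d) * (hh x $ i))) (at x)"
      by (simp add: G_def)
    moreover have "G' i x = (\<lambda>d. \<psi> (w x) * (hh' x d $ i) + \<psi>' (w x) * (frechet_derivative u (at x) d - frechet_derivative v (at x) d) * (hh x $ i))"
      using True by (simp add: G'_def fun_eq_iff)
    ultimately show ?thesis by simp
  next
    case False
    then have xK: "x \<in> - K" using KO by auto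
    have "((\<lambda>_. 0) has_derivative (\<lambda>_. 0)) (at x)" by simp
    from has_derivative_transform_within_open[OF this _ xK, of "G i"]
    have "(G i has_derivative (\<lambda>_. 0)) (at x)" using cK Gz
      by (simp add: compact_imp_closed open_Compl)
    then show ?thesis using False by (simp add: G'_def)
  qed
  have Gc: "continuous_on K (\<lambda>x. G' i x (axis i 1))" for i
  proof -
    have "continuous_on \<Omega> (\<lambda>x. \<psi>' (w x) * (grad u x $ i - grad v x $ i) * (hh x $ i) + \<psi> (w x) * (hh' x (axis i 1) $ i))"
      by (intro continuous_intros continuous_on_compose2[OF cpsi' cwO] continuous_on_compose2[OF cpsi cwO]
          cgu cgv chh chh') auto
    then have "continuous_on \<Omega> (\<lambda>x. G' i x (axis i 1))"
      by (rule continuous_on_eq) (simp add: G'_def gradc)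
    then show ?thesis using continuous_on_subset KO by blast
  qed
  have Gint: "((\<lambda>x. G' i x (axis i 1)) has_integral 0) UNIV" for i
    using integral_partial_zero[OF cK Gz GD Gc] .
  have Sint: "((\<lambda>x. \<Sum>i\<in>UNIV. G' i x (axis i 1)) has_integral 0) UNIV"
    using has_integral_sum[of UNIV "\<lambda>i x. G' i x (axis i 1)" "\<lambda>_. 0" UNIV] Gint by simp

  have perp: "(\<Sum>i\<in>UNIV. (frechet_derivative u (at x) (axis i 1) - frechet_derivative v (at x) (axis i 1)) * (hh x $ i)) = 0"
    if xO: "x \<in> \<Omega>" for x
  proof -
    define X where "X = grad u x + F x"
    define Y where "Y = grad v x + F x"
    have "(\<Sum>i\<in>UNIV. (frechet_derivative u (at x) (axis i 1) - frechet_derivative v (at x) (axis i 1)) * (hh x $ i))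
        = (X - Y) \<bullet> Jm Y"
      by (simp add: inner_vec_def X_def Y_def hh_def gradc)
    also have "\<dots> = X \<bullet> Jm Y" by (simp add: inner_diff_left Jm_perp)
    also have "\<dots> = 0"
    proof (cases "X = 0 \<or> Y = 0")
      case True
      then show ?thesis using linear_0[OF bounded_linear.linear[OF Jm_linear]] by (metis inner_zero_left inner_zero_right)
    next
      case False
      then have "x \<notin> singset \<Omega> F u" "x \<notin> singset \<Omega> F v" by (auto simp: singset_def X_def Y_def)
      with NN xO have "Nfield F u x = Nfield F v x" by blast
      then have eq: "inverse (norm X) *\<^sub>R X = inverse (norm Y) *\<^sub>R Y" by (simp add: Nfield_def X_def Y_def)
      have "X = norm X *\<^sub>R (inverse (norm X) *\<^sub>R X)" using False by simp
      also have "\<dots> = (norm X * inverse (norm Y)) *\<^sub>R Y" by (simp add: eq)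
      finally have "X = (norm X * inverse (norm Y)) *\<^sub>R Y" .
      then show ?thesis by (metis inner_scaleR_left Jm_perp mult_zero_right)
    qed
    finally show ?thesis .
  qed
  have div: "(\<Sum>i\<in>UNIV. hh' x (axis i 1) $ i) = divg (Fstar F) x" if xO: "x \<in> \<Omega>" for x
  proof -
    define A where "A = frechet_derivative (grad v) (at x)"
    define B where "B = frechet_derivative F (at x)"
    have fs: "frechet_derivative (Fstar F) (at x) = (\<lambda>d. Jm (B d))"
    proof -
      have "Fstar F = (\<lambda>y. Jm (F y))" by (simp add: fun_eq_iff Fstar_Jm)
      moreover have "((\<lambda>y. Jm (F y)) has_derivative (\<lambda>d. Jm (B d))) (at x)"
        unfolding B_def using bounded_linear.has_derivative[OF Jm_linear DF[OF xO]] .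
      ultimately show ?thesis using frechet_derivative_at by metis
    qed
    have sym: "A (axis (j, False) 1) $ (j, True) = A (axis (j, True) 1) $ (j, False)" for j
    proof -
      have pa: "((\<lambda>y. frechet_derivative v (at y) (axis k 1)) has_derivative (\<lambda>d. frechet_derivative (grad v) (at y) d $ k)) (at y)"
        if "y \<in> \<Omega>" for y k
      proof -
        have "(\<lambda>y. frechet_derivative v (at y) (axis k 1)) = (\<lambda>y. grad v y $ k)" by (simp add: gradc)
        then show ?thesis using bounded_linear.has_derivative[OF bounded_linear_vec_nth Dgv[OF that]] by simp
      qed
      show ?thesis unfolding A_def
        by (rule schwarz[where S=\<Omega> and f=v and f'="\<lambda>y. frechet_derivative v (at y)"
              and a="axis (j, False) 1" and b="axis (j, True) 1"
              and Da="\<lambda>y d. frechet_derivative (grad v) (at y) d $ (j, False)"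
              and Db="\<lambda>y d. frechet_derivative (grad v) (at y) d $ (j, True)", OF op xO Dv pa pa cgv2 cgv2, symmetric])
    qed
    have "(\<Sum>i\<in>UNIV. hh' x (axis i 1) $ i) = (\<Sum>i\<in>UNIV. Jm (A (axis i 1)) $ i) + (\<Sum>i\<in>UNIV. Jm (B (axis i 1)) $ i)"
      by (simp add: hh'_def A_def B_def linear_add[OF bounded_linear.linear[OF Jm_linear]] sum.distrib)
    also have "(\<Sum>i\<in>UNIV. Jm (A (axis i 1)) $ i) = 0"
      by (simp add: sum_pair Jm_def sym)
    also have "(\<Sum>i\<in>UNIV. Jm (B (axis i 1)) $ i) = divg (Fstar F) x"
      by (simp add: divg_def fs)
    finally show ?thesis by simp
  qed
  define D where "D x = (if x \<in> \<Omega> then \<psi> (w x) * divg (Fstar F) x else 0)" for x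
  have DS: "(\<Sum>i\<in>UNIV. G' i x (axis i 1)) = D x" for x
  proof (cases "x \<in> \<Omega>")
    case True
    have "(\<Sum>i\<in>UNIV. G' i x (axis i 1)) = \<psi>' (w x) * (\<Sum>i\<in>UNIV. (frechet_derivative u (at x) (axis i 1) - frechet_derivative v (at x) (axis i 1)) * (hh x $ i))
       + \<psi> (w x) * (\<Sum>i\<in>UNIV. hh' x (axis i 1) $ i)"
      using True by (simp add: G'_def sum.distrib sum_distrib_left mult.assoc)
    also have "\<dots> = D x" using True perp div by (simp add: D_def)
    finally show ?thesis .
  next
    case False then show ?thesis by (simp add: G'_def D_def)
  qed
  have Dint: "(D has_integral 0) UNIV" using Sint DS by simp

  have divc: "divg (Fstar F) x = (\<Sum>i\<in>UNIV. Jm (frechet_derivative F (at x) (axis i 1)) $ i)" if xO: "x \<in> \<Omega>" for x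
  proof -
    have "Fstar F = (\<lambda>y. Jm (F y))" by (simp add: fun_eq_iff Fstar_Jm)
    moreover have "((\<lambda>y. Jm (F y)) has_derivative (\<lambda>d. Jm (frechet_derivative F (at x) d))) (at x)"
      using bounded_linear.has_derivative[OF Jm_linear DF[OF xO]] .
    ultimately have "frechet_derivative (Fstar F) (at x) = (\<lambda>d. Jm (frechet_derivative F (at x) d))"
      using frechet_derivative_at by metis
    then show ?thesis by (simp add: divg_def)
  qed
  have cdiv: "continuous_on \<Omega> (divg (Fstar F))"
  proof -
    have "continuous_on \<Omega> (\<lambda>x. Jm (frechet_derivative F (at x) (axis i 1)) $ i)" for i
      by (cases "snd i") (auto simp: Jm_def intro!: continuous_intros cF2)
    then have "continuous_on \<Omega> (\<lambda>x. \<Sum>i\<in>UNIV. Jm (frechet_derivative F (at x) (axis i 1)) $ i)"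
      by (intro continuous_on_sum) auto
    then show ?thesis by (rule continuous_on_eq) (simp add: divc)
  qed
  have div_nn: "divg (Fstar F) x \<ge> 0" if xO: "x \<in> \<Omega>" for x
  proof (rule ccontr)
    assume neg: "\<not> ?thesis"
    define U where "U = \<Omega> \<inter> divg (Fstar F) -` {..<0}"
    have "open U" unfolding U_def by (rule continuous_open_preimage[OF cdiv op]) auto
    moreover have "U \<noteq> {}" using xO neg by (auto simp: U_def)
    ultimately obtain y where "y \<in> U" "y \<in> \<Omega> \<longrightarrow> divg (Fstar F) y > 0" using AE_point[OF _ _ AE] by blast
    then show False by (auto simp: U_def)
  qed
  have Dnn: "D x \<ge> 0" for x using div_nn psi_nn by (simp add: D_def)
  define U where "U = \<Omega> \<inter> w -` {\<epsilon><..}"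
  have "open U" unfolding U_def by (rule continuous_open_preimage[OF cwO op]) auto
  moreover have "x0 \<in> U" using x0 \<epsilon> by (auto simp: U_def w_def \<epsilon>_def)
  ultimately obtain x1 where x1: "x1 \<in> U" "x1 \<in> \<Omega> \<longrightarrow> divg (Fstar F) x1 > 0" using AE_point[OF _ _ AE] by blast
  have "\<psi> (w x1) > 0" using x1 by (auto simp: U_def \<psi>_def)
  then have D1: "D x1 > 0" using x1 by (auto simp: U_def D_def)
  have cD: "continuous_on \<Omega> D"
  proof -
    have "continuous_on \<Omega> (\<lambda>x. \<psi> (w x) * divg (Fstar F) x)"
      by (intro continuous_intros continuous_on_compose2[OF cpsi cwO] cdiv) auto
    then show ?thesis by (rule continuous_on_eq) (simp add: D_def)
  qed
  show False using integral_pos_contra[OF Dnn Dint op _ cD D1] x1 by (auto simp: U_def)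
qed


theorem lemma5p3:
  fixes \<Omega> :: "(real ^ ('m::finite \<times> bool)) set"
    and F :: "real ^ ('m \<times> bool) \<Rightarrow> real ^ ('m \<times> bool)"
    and u v :: "real ^ ('m \<times> bool) \<Rightarrow> real"
  assumes "open \<Omega>" and "connected \<Omega>" and "\<Omega> \<noteq> {}" and "bounded \<Omega>"
    and "C1_field \<Omega> F"
    and "C2_fun \<Omega> u" and "continuous_on (closure \<Omega>) u"
    and "C2_fun \<Omega> v" and "continuous_on (closure \<Omega>) v"
    and "\<forall>p \<in> \<Omega> - (singset \<Omega> F u \<union> singset \<Omega> F v). Nfield F u p = Nfield F v p"
    and "\<forall>p \<in> frontier \<Omega>. u p = v p"
    and "AE x in lebesgue. x \<in> \<Omega> \<longrightarrow> divg (Fstar F) x > 0"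
  shows "\<forall>p \<in> closure \<Omega>. u p = v p"
proof
  fix p assume p: "p \<in> closure \<Omega>"
  have le1: "\<forall>p \<in> \<Omega>. u p \<le> v p"
    by (rule one_side) (use assms in auto)
  have NN': "\<forall>p \<in> \<Omega> - (singset \<Omega> F v \<union> singset \<Omega> F u). Nfield F v p = Nfield F u p"
    using assms(10) by auto
  have le2: "\<forall>p \<in> \<Omega>. v p \<le> u p"
    by (rule one_side[OF assms(1,4,5,8,9,6,7) NN']) (use assms(11,12) in auto)
  show "u p = v p"
  proof (cases "p \<in> \<Omega>")
    case True then show ?thesis using le1 le2 by (simp add: order_antisym)
  next
    case False
    then have "p \<in> frontier \<Omega>" using p assms(1) by (simp add: frontier_def interior_open)
    then show ?thesis using assms(11) by simp
  qed
qed

end
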